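(* Suppose $D$, $\gamma$, $\Phi$ are as below (standing assumptions). (i) For any $q\in[0,\gamma)$ there exists $C=C(q)>0$ such that $$\int_{B(x,r)\cap D}\frac{dy}{(\delta_D(y)\wedge A)^q}\le\frac{Cr^d}{((\delta_D(x)\vee r)\wedge A)^q}\quad\text{for all }A\in(0,\infty],\ x\in\overline D,\ r>0.$$ (ii) There exists $C>0$ such that $$\int_{B(x,r)\cap D}\Phi\Big(\frac{a}{\delta_D(y)\wedge A}\Big)dy\le Cr^d\Phi\Big(\frac{a}{(\delta_D(x)\vee r)\wedge A}\Big)\quad\text{for all }A\in(0,\infty],\ x\in\overline D,\ a,r>0.$$
   Context: Standing assumptions: $d\ge1$, $\alpha\in(0,2)$; $D\subset\mathbb{R}^d$ is a $\kappa$-fat open set (for some $\kappa\in(0,1)$, with localization constant $R_0\in(0,\mathrm{diam}(D)]$: for every $x\in\overline D$, $r\in(0,R_0)$ there is $z\in D$ with $B(z,\kappa r)\subset D\cap B(x,r)$) whose boundary has Assouad dimension $\dim_{\rm A}(\partial D)<d$, where $\dim_{\rm A}(E)$ is the infimum of $\lambda>0$ such that for some $C$, for all $x\in E$, $0<s\le r<\mathrm{diam}(E)$, $B(x,r)\cap E$ is covered by at most $C(r/s)^\lambda$ balls of radius $s$ centered in $E$. $\gamma:=d-\dim_{\rm A}(\partial D)$, $\delta_D(x)=\mathrm{dist}(x,\partial D)$, $r\wedge\infty=r$. $\Phi:[0,\infty)\to[1,\infty)$ is continuous, increasing, $\Phi(0)=1$, and satisfies $\Phi(r)/\Phi(s)\le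 C(r/s)^\beta$ ($0<s\le r$) for some $\beta\ge0$, $C>1$; the infimum $\overline\beta$ of such $\beta$ satisfies $\overline\beta<\gamma\wedge\alpha$. *)

theory Defs
  imports "HOL-Analysis.Analysis"
begin

definition ediam :: "'a::metric_space set \<Rightarrow> ereal" where
  "ediam E = (if bounded E then ereal (diameter E) else \<infinity>)"

definition bdist :: "'a::euclidean_space set \<Rightarrow> 'a \<Rightarrow> real" where
  "bdist D x = infdist x (frontier D)"

definition assouad_exps :: "'a::metric_space set \<Rightarrow> real set" where
  "assouad_exps E = {l. l > 0 \<and> (\<exists>C. \<forall>x\<in>E. \<forall>s r. 0 < s \<and> s \<le> r \<and> ereal r < ediam E \<longrightarrow>
       (\<exists>F. finite F \<and> F \<subseteq> E \<and> real (card F) \<le> C * (r / s) powr l \<and>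
            ball x r \<inter> E \<subseteq> (\<Union>c\<in>F. ball c s)))}"

text \<open>Assouad dimension (infimum; \<open>\<infinity>\<close> if no admissible exponent).\<close>
definition assouad_dim :: "'a::metric_space set \<Rightarrow> ereal" where
  "assouad_dim E = Inf (ereal ` assouad_exps E)"

definition kappa_fat :: "real \<Rightarrow> real \<Rightarrow> 'a::euclidean_space set \<Rightarrow> bool" where
  "kappa_fat \<kappa> R0 D \<longleftrightarrow> open D \<and> 0 < \<kappa> \<and> \<kappa> < 1 \<and> 0 < R0 \<and> ereal R0 \<le> ediam D \<and>
     (\<forall>x\<in>closure D. \<forall>r. 0 < r \<and> r < R0 \<longrightarrow> (\<exists>z\<in>D. ball z (\<kappa> * r) \<subseteq> D \<inter> ball x r))"

text \<open>Truncation \<open>t \<and> A\<close> with \<open>A \<in> (0,\<infinity>]\<close>, where \<open>t \<and> \<infinity> = t\<close>.\<close>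
definition trunc :: "real \<Rightarrow> ereal \<Rightarrow> real" where
  "trunc t A = real_of_ereal (min (ereal t) A)"

definition scaling_exps :: "(real \<Rightarrow> real) \<Rightarrow> real set" where
  "scaling_exps \<Phi> = {\<beta>. \<beta> \<ge> 0 \<and> (\<exists>C>1. \<forall>s r. 0 < s \<and> s \<le> r \<longrightarrow> \<Phi> r / \<Phi> s \<le> C * (r / s) powr \<beta>)}"

end

theory Submission imports Defs begin

lemma infdist_lessE:
  assumes "infdist x E < s" "E \<noteq> {}"
  obtains w where "w \<in> E" "dist x w < s"
proof -
  have "(INF a\<in>E. dist x a) < s" using assms by (simp add: infdist_notempty)
  then obtain w where "w \<in> E" "dist x w < s"
    using assms(2) by (subst (asm) cINF_less_iff) (auto intro: bdd_belowI[of _ 0])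
  then show ?thesis using that by blast
qed

lemma cov:
  fixes E :: "'a::euclidean_space set"
  assumes l: "l \<in> assouad_exps E" and cl: "closed E"
  shows "\<exists>M>0. \<forall>z\<in>E. \<forall>\<rho> s. 0 < s \<and> s \<le> \<rho> \<longrightarrow>
     (\<exists>F. finite F \<and> real (card F) \<le> M * (\<rho> / s) powr l \<and> ball z \<rho> \<inter> E \<subseteq> (\<Union>c\<in>F. ball c s))"
proof -
  from l obtain C0 where lpos: "l > 0" and C0: "\<forall>x\<in>E. \<forall>s r. 0 < s \<and> s \<le> r \<and> ereal r < ediam E \<longrightarrow>
       (\<exists>F. finite F \<and> F \<subseteq> E \<and> real (card F) \<le> C0 * (r / s) powr l \<and>
            ball x r \<inter> E \<subseteq> (\<Union>c\<in>F. ball c s))"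
    unfolding assouad_exps_def by blast
  have "\<exists>F0. finite F0 \<and> F0 \<subseteq> E \<and> (bounded E \<and> diameter E > 0 \<longrightarrow> E \<subseteq> (\<Union>e\<in>F0. ball e (diameter E / 2)))"
  proof (cases "bounded E \<and> diameter E > 0")
    case True
    then have "compact E" using cl bounded_closed_imp_seq_compact compact_eq_seq_compact_metric by blast
    moreover have "E \<subseteq> (\<Union>e\<in>E. ball e (diameter E / 2))" using True by auto
    ultimately obtain F0 where "F0 \<subseteq> E" "finite F0" "E \<subseteq> (\<Union>e\<in>F0. ball e (diameter E / 2))"
      using compactE_image[of E E "\<lambda>e. ball e (diameter E / 2)"] by blast
    then show ?thesis by blast
  qed auto
  then obtain F0 where F0: "finite F0" "F0 \<subseteq> E"
    "bounded E \<Longrightarrow> diameter E > 0 \<Longrightarrow> E \<subseteq> (\<Union>e\<in>F0. ball e (diameter E / 2))" by blast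
  define M where "M = 1 + \<bar>C0\<bar> * (1 + real (card F0))"
  have Mpos: "M > 0" unfolding M_def by (simp add: add_pos_nonneg)
  show ?thesis
  proof (intro exI[of _ M] conjI Mpos ballI allI impI)
    fix z and \<rho> s :: real assume z: "z \<in> E" and rs: "0 < s \<and> s \<le> \<rho>"
    have ge1: "(\<rho> / s) powr l \<ge> 1" using rs lpos by (simp add: ge_one_powr_ge_zero)
    have "0 \<le> \<bar>C0\<bar> * real (card F0)" by simp
    then have CM: "C0 \<le> M" "\<bar>C0\<bar> * real (card F0) \<le> M" unfolding M_def
      using abs_ge_self[of C0] abs_ge_zero[of C0] \<open>0 \<le> \<bar>C0\<bar> * real (card F0)\<close>
      by (simp_all only: distrib_left mult_1_right)
    show "\<exists>F. finite F \<and> real (card F) \<le> M * (\<rho> / s) powr l \<and> ball z \<rho> \<inter> E \<subseteq> (\<Union>c\<in>F. ball c s)"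
    proof (cases "ereal \<rho> < ediam E")
      case True
      with C0 z rs obtain F where F: "finite F" "real (card F) \<le> C0 * (\<rho> / s) powr l"
        "ball z \<rho> \<inter> E \<subseteq> (\<Union>c\<in>F. ball c s)" using C0 z rs True by meson
      have "C0 * (\<rho> / s) powr l \<le> M * (\<rho> / s) powr l"
        using CM ge1 by (intro mult_right_mono) auto
      then show ?thesis using F by (intro exI[of _ F]) auto
    next
      case False
      then have bE: "bounded E" and Dle: "diameter E \<le> \<rho>" unfolding ediam_def by (auto split: if_splits)
      have dzw: "dist z w \<le> diameter E" if "w \<in> E" for w using diameter_bounded_bound[OF bE z that] .
      show ?thesis
      proof (cases "diameter E < s")
        case True
        have "ball z \<rho> \<inter> E \<subseteq> ball z s"
        proof
          fix w assume "w \<in> ball z \<rho> \<inter> E"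
          then have "dist z w \<le> diameter E" using dzw by blast
          then show "w \<in> ball z s" using True by simp
        qed
        moreover have "real (card {z}) \<le> M * (\<rho> / s) powr l"
        proof -
          have "M \<ge> 1" unfolding M_def using abs_ge_zero[of C0] by (simp add: add_nonneg_nonneg)
          then have "1 * 1 \<le> M * (\<rho> / s) powr l" using ge1 by (intro mult_mono) auto
          then show ?thesis by simp
        qed
        ultimately show ?thesis by (intro exI[of _ "{z}"]) simp
      next
        case False
        let ?D = "diameter E"
        have Dpos: "?D > 0" using False rs by linarith
        have "\<forall>e\<in>F0. \<exists>Fe. finite Fe \<and> real (card Fe) \<le> C0 * ((?D/2) / (s/2)) powr l \<and>
            ball e (?D/2) \<inter> E \<subseteq> (\<Union>c\<in>Fe. ball c (s/2))"
        proof
          fix e assume e: "e \<in> F0"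
          have "ereal (?D/2) < ediam E" using bE Dpos by (simp add: ediam_def)
          then show "\<exists>Fe. finite Fe \<and> real (card Fe) \<le> C0 * ((?D/2) / (s/2)) powr l \<and>
            ball e (?D/2) \<inter> E \<subseteq> (\<Union>c\<in>Fe. ball c (s/2))"
          proof -
            have "e \<in> E" using e F0(2) by blast
            moreover have "0 < s/2 \<and> s/2 \<le> ?D/2 \<and> ereal (?D/2) < ediam E" using rs False \<open>ereal (?D/2) < ediam E\<close> by simp
            ultimately have "\<exists>F. finite F \<and> F \<subseteq> E \<and> real (card F) \<le> C0 * ((?D/2) / (s/2)) powr l \<and>
              ball e (?D/2) \<inter> E \<subseteq> (\<Union>c\<in>F. ball c (s/2))"
              using C0 by (intro C0[rule_format]) auto
            then show ?thesis by (elim exE conjE) (intro exI conjI, assumption+)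
          qed
        qed
        then obtain G where G: "\<And>e. e \<in> F0 \<Longrightarrow> finite (G e) \<and> real (card (G e)) \<le> C0 * ((?D/2) / (s/2)) powr l \<and>
            ball e (?D/2) \<inter> E \<subseteq> (\<Union>c\<in>G e. ball c (s/2))" by (rule bchoice[THEN exE]) blast
        define F where "F = (\<Union>e\<in>F0. G e)"
        have finF: "finite F" unfolding F_def using F0(1) G by (intro finite_UN_I) auto
        have "real (card F) \<le> (\<Sum>e\<in>F0. real (card (G e)))"
          unfolding F_def using card_UN_le[OF F0(1), of G] by (simp only: of_nat_sum[symmetric] of_nat_le_iff)
        also have "\<dots> \<le> (\<Sum>e\<in>F0. C0 * ((?D/2) / (s/2)) powr l)"
          using G by (intro sum_mono) auto
        also have "\<dots> = real (card F0) * (C0 * (?D / s) powr l)" using rs by (simp add: field_simps)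
        also have "\<dots> \<le> real (card F0) * (\<bar>C0\<bar> * (\<rho> / s) powr l)"
        proof -
          have "(?D / s) powr l \<le> (\<rho> / s) powr l"
            using Dle rs Dpos lpos by (intro powr_mono2 divide_right_mono) auto
          moreover have "C0 \<le> \<bar>C0\<bar>" by simp
          ultimately have "C0 * (?D / s) powr l \<le> \<bar>C0\<bar> * (\<rho> / s) powr l"
            by (intro mult_mono) auto
          then show ?thesis by (intro mult_left_mono) auto
        qed
        also have "\<dots> \<le> M * (\<rho> / s) powr l"
          using CM ge1 mult_right_mono[OF CM(2), of "(\<rho> / s) powr l"] by (simp add: mult.assoc mult.left_commute)
        finally have cardF: "real (card F) \<le> M * (\<rho> / s) powr l" .
        have "ball z \<rho> \<inter> E \<subseteq> (\<Union>c\<in>F. ball c s)"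
        proof
          fix w assume w: "w \<in> ball z \<rho> \<inter> E"
          then obtain e where "e \<in> F0" "w \<in> ball e (?D/2)" using F0(3)[OF bE Dpos] by blast
          then obtain c where "c \<in> G e" "w \<in> ball c (s/2)" using G w by blast
          moreover have "ball c (s/2) \<subseteq> ball c s" using rs by (intro subset_ball) simp
          ultimately show "w \<in> (\<Union>c\<in>F. ball c s)" unfolding F_def using \<open>e \<in> F0\<close> by blast
        qed
        then show ?thesis using finF cardF by blast
      qed
    qed
  qed
qed

lemma tube:
  fixes E :: "'a::euclidean_space set"
  assumes M: "M > 0" "\<forall>z\<in>E. \<forall>\<rho> s. 0 < s \<and> s \<le> \<rho> \<longrightarrow>
     (\<exists>F. finite F \<and> real (card F) \<le> M * (\<rho> / s) powr l \<and> ball z \<rho> \<inter> E \<subseteq> (\<Union>c\<in>F. ball c s))"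
    and ne: "E \<noteq> {}"
  shows "\<exists>K>0. \<forall>x \<rho> s. 0 < s \<and> s \<le> \<rho> \<longrightarrow>
     emeasure lborel {y\<in>ball x \<rho>. infdist y E < s} \<le> ennreal (K * \<rho> powr l * s powr (real DIM('a) - l))"
proof -
  define \<omega> where "\<omega> = unit_ball_vol (real DIM('a))"
  have \<omega>: "\<omega> > 0" unfolding \<omega>_def by simp
  define K where "K = M * 4 powr l * \<omega> * 2 ^ DIM('a)"
  have Kpos: "K > 0" unfolding K_def using M \<omega> by simp
  show ?thesis
  proof (intro exI[of _ K] conjI Kpos allI impI)
    fix x :: 'a and \<rho> s :: real assume rs: "0 < s \<and> s \<le> \<rho>"
    let ?S = "{y\<in>ball x \<rho>. infdist y E < s}"
    show "emeasure lborel ?S \<le> ennreal (K * \<rho> powr l * s powr (real DIM('a) - l))"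
    proof (cases "?S = {}")
      case True
      show ?thesis unfolding True by simp
    next
      case False
      then obtain y0 where y0: "y0 \<in> ball x \<rho>" "infdist y0 E < s" by blast
      then obtain z where z: "z \<in> E" "dist y0 z < s" using infdist_lessE ne by blast
      have "0 < s \<and> s \<le> 4 * \<rho>" using rs by simp
      then obtain F where F: "finite F" "real (card F) \<le> M * (4 * \<rho> / s) powr l"
        "ball z (4 * \<rho>) \<inter> E \<subseteq> (\<Union>c\<in>F. ball c s)"
        using M(2) z(1) by meson
      have sub: "?S \<subseteq> (\<Union>c\<in>F. ball c (2 * s))"
      proof
        fix y assume y: "y \<in> ?S"
        then obtain w where w: "w \<in> E" "dist y w < s" using infdist_lessE ne by blast
        have "dist z w \<le> dist z y0 + dist y0 x + dist x y + dist y w"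
          by (smt (verit) dist_triangle)
        also have "\<dots> < 4 * \<rho>" using y y0 z w rs by (simp add: dist_commute)
        finally have "w \<in> ball z (4 * \<rho>) \<inter> E" using w by simp
        then obtain c where c: "c \<in> F" "dist c w < s" using F(3) by auto
        have "dist c y \<le> dist c w + dist y w" by (simp add: dist_triangle2)
        then have "dist c y < 2 * s" using c w by simp
        then show "y \<in> (\<Union>c\<in>F. ball c (2 * s))" using c by auto
      qed
      have "emeasure lborel ?S \<le> emeasure lborel (\<Union>c\<in>F. ball c (2 * s))"
        by (intro emeasure_mono sub) (auto intro!: borel_open)
      also have "\<dots> \<le> (\<Sum>c\<in>F. emeasure lborel (ball c (2 * s)))"
        by (intro emeasure_subadditive_finite F(1)) auto
      also have "\<dots> = ennreal (real (card F) * (\<omega> * (2 * s) ^ DIM('a)))"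
      proof -
        have "(\<Sum>c\<in>F. emeasure lborel (ball c (2 * s))) = (\<Sum>c\<in>F. ennreal (\<omega> * (2 * s) ^ DIM('a)))"
          unfolding \<omega>_def by (intro sum.cong refl emeasure_ball) (use rs in simp)
        also have "\<dots> = of_nat (card F) * ennreal (\<omega> * (2 * s) ^ DIM('a))" by simp
        also have "\<dots> = ennreal (real (card F) * (\<omega> * (2 * s) ^ DIM('a)))"
          using \<omega> rs by (simp add: ennreal_of_nat_eq_real_of_nat ennreal_mult')
        finally show ?thesis .
      qed
      also have "\<dots> \<le> ennreal (M * (4 * \<rho> / s) powr l * (\<omega> * (2 * s) ^ DIM('a)))"
        using F(2) \<omega> rs by (intro ennreal_leI mult_right_mono) auto
      also have "M * (4 * \<rho> / s) powr l * (\<omega> * (2 * s) ^ DIM('a)) = K * \<rho> powr l * s powr (real DIM('a) - l)"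
      proof -
        have "(4 * \<rho> / s) powr l = 4 powr l * \<rho> powr l / s powr l"
          using rs by (simp add: powr_divide powr_mult)
        moreover have "(2 * s) ^ DIM('a) = 2 ^ DIM('a) * s powr real DIM('a)"
          using rs by (simp add: powr_realpow power_mult_distrib)
        moreover have "s powr real DIM('a) / s powr l = s powr (real DIM('a) - l)"
          using rs by (simp add: powr_diff)
        ultimately show ?thesis unfolding K_def using rs
          by (simp add: field_simps)
      qed
      finally show ?thesis .
    qed
  qed
qed

lemma find_level:
  fixes R t :: real
  assumes "0 < t" "t < R"
  obtains k where "t < R * (1/2)^k" "R * (1/2)^k / 2 \<le> t"
proof -
  obtain n where n: "R / t < 2 ^ n" using real_arch_pow[of 2 "R / t"] by auto
  have P: "R * (1/2)^n \<le> t"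
    using n assms by (simp add: field_simps power_one_over)
  define m where "m = (LEAST n. R * (1/2)^n \<le> t)"
  have m: "R * (1/2)^m \<le> t" unfolding m_def using P by (rule LeastI)
  have "m \<noteq> 0" using m assms by (intro notI) simp
  then obtain k where k: "m = Suc k" using not0_implies_Suc by blast
  have "\<not> R * (1/2)^k \<le> t"
  proof
    assume "R * (1/2)^k \<le> t"
    then have "m \<le> k" unfolding m_def by (rule Least_le)
    then show False using k by simp
  qed
  then have "t < R * (1/2)^k" by simp
  moreover have "R * (1/2)^k / 2 \<le> t" using m k by (simp add: field_simps)
  ultimately show ?thesis using that by blast
qed

lemma intg:
  fixes E :: "'a::euclidean_space set"
  assumes K: "K > 0" "\<forall>x \<rho> s. 0 < s \<and> s \<le> \<rho> \<longrightarrow>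
     emeasure lborel {y\<in>ball x \<rho>. infdist y E < s} \<le> ennreal (K * \<rho> powr l * s powr (real DIM('a) - l))"
    and q: "0 \<le> q" "l + q < real DIM('a)"
  shows "\<exists>C>0. \<forall>x r R c. 0 < R \<and> R \<le> r \<and> 0 \<le> c \<longrightarrow>
     (\<integral>\<^sup>+y. ennreal c * (indicator (ball x r) y * ennreal (min (infdist y E) R powr (-q))) \<partial>lborel)
       \<le> ennreal (c * (C * r ^ DIM('a) * R powr (-q)))"
proof -
  define d where "d = real DIM('a)"
  define \<theta> where "\<theta> = d - l - q"
  have \<theta>: "\<theta> > 0" using q unfolding \<theta>_def d_def by simp
  define h where "h = (1/2::real) powr \<theta>"
  have h: "0 < h" "h < 1" unfolding h_def using \<theta> powr_less_mono2[of \<theta> "1/2" 1] by auto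
  define \<omega> where "\<omega> = unit_ball_vol (real DIM('a))"
  have \<omega>: "\<omega> > 0" unfolding \<omega>_def by simp
  define C where "C = \<omega> + K * 2 powr q / (1 - h)"
  have Cpos: "C > 0" unfolding C_def using \<omega> h K by (simp add: add_pos_nonneg)
  show ?thesis
  proof (intro exI[of _ C] conjI Cpos allI impI)
    fix x :: 'a and r R c :: real assume rRc: "0 < R \<and> R \<le> r \<and> 0 \<le> c"
    then have rR: "0 < R \<and> R \<le> r" and c0: "0 \<le> c" by auto
    define sk where "sk k = R * (1/2::real)^k" for k
    have sk_pos: "sk k > 0" for k unfolding sk_def using rR by simp
    have sk_le: "sk k \<le> r" for k
    proof -
      have "(1/2::real)^k \<le> 1" by (simp add: power_le_one)
      then have "R * (1/2::real)^k \<le> R * 1" using rR by (intro mult_left_mono) auto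
      then show ?thesis unfolding sk_def using rR by linarith
    qed
    define T where "T k = ball x r \<inter> {y. infdist y E < sk k}" for k
    define cc where "cc k = (sk k / 2) powr (-q)" for k
    have Tmeas: "T k \<in> sets lborel" for k
    proof -
      have "open {y. infdist y E < sk k}"
        by (intro open_Collect_less continuous_on_infdist continuous_on_id continuous_on_const)
      then have "open (T k)" unfolding T_def by (intro open_Int) auto
      then show ?thesis unfolding sets_lborel by (rule borel_open)
    qed
    define g0 where "g0 y = ennreal (R powr (-q)) * indicator (ball x r) y" for y
    define gs where "gs y = (\<Sum>k. ennreal (cc k) * indicator (T k) y)" for y
    have pw: "indicator (ball x r) y * ennreal (min (infdist y E) R powr (-q)) \<le> g0 y + gs y" for y
    proof (cases "y \<in> ball x r")
      case False
      then show ?thesis by simp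
    next
      case yin: True
      consider "infdist y E = 0" | "infdist y E \<ge> R" | "0 < infdist y E \<and> infdist y E < R"
        using infdist_nonneg[of y E] by linarith
      then show ?thesis
      proof cases
        case 1
        then show ?thesis using rR by simp
      next
        case 2
        then have "min (infdist y E) R = R" by simp
        then show ?thesis unfolding g0_def using yin by simp
      next
        case 3
        then obtain k where k: "infdist y E < sk k" "sk k / 2 \<le> infdist y E"
          unfolding sk_def using find_level by blast
        have "indicator (ball x r) y * ennreal (min (infdist y E) R powr (-q))
              = ennreal (infdist y E powr (-q))" using yin 3 by simp
        also have "\<dots> \<le> ennreal (cc k)"
          unfolding cc_def using k q sk_pos[of k] by (intro ennreal_leI powr_mono2') auto
        also have "\<dots> = ennreal (cc k) * indicator (T k) y" using yin k unfolding T_def by simp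
        also have "\<dots> \<le> gs y" unfolding gs_def
        proof -
          let ?f = "\<lambda>k. ennreal (cc k) * indicator (T k) y"
          have "sum ?f {k} \<le> suminf ?f" by (rule sum_le_suminf) (auto simp: summableI)
          then show "?f k \<le> suminf ?f" by (simp only: sum.insert finite.emptyI empty_iff sum.empty add_0_right not_False_eq_True)
        qed
        also have "\<dots> \<le> g0 y + gs y" by simp
        finally show ?thesis .
      qed
    qed
    have bmT: "(\<lambda>y. ennreal (cc k) * indicator (T k) y) \<in> borel_measurable lborel" for k
      using Tmeas by (intro borel_measurable_times_ennreal borel_measurable_const borel_measurable_indicator) auto
    have bm0: "g0 \<in> borel_measurable lborel" unfolding g0_def
      by (intro borel_measurable_times_ennreal borel_measurable_const borel_measurable_indicator) auto
    have bms: "gs \<in> borel_measurable lborel" unfolding gs_def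
      using bmT by (rule borel_measurable_suminf_order)
    have I0: "(\<integral>\<^sup>+y. g0 y \<partial>lborel) = ennreal (R powr (-q) * (\<omega> * r ^ DIM('a)))"
      unfolding g0_def \<omega>_def using rR by (simp add: nn_integral_cmult_indicator emeasure_ball ennreal_mult')
    have "(\<integral>\<^sup>+y. gs y \<partial>lborel) = (\<Sum>k. ennreal (cc k) * emeasure lborel (T k))"
      unfolding gs_def using bmT Tmeas by (subst nn_integral_suminf) (auto simp: nn_integral_cmult_indicator)
    also have "\<dots> \<le> (\<Sum>k. ennreal (K * r powr l * 2 powr q * R powr \<theta> * h ^ k))"
    proof (intro suminf_le allI)
      fix k
      have "T k = {y\<in>ball x r. infdist y E < sk k}" unfolding T_def by auto
      then have "emeasure lborel (T k) \<le> ennreal (K * r powr l * sk k powr (d - l))"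
        using K(2) sk_pos[of k] sk_le[of k] unfolding d_def by simp
      then have "ennreal (cc k) * emeasure lborel (T k) \<le> ennreal (cc k) * ennreal (K * r powr l * sk k powr (d - l))"
        by (rule mult_left_mono) simp
      also have "\<dots> = ennreal (cc k * (K * r powr l * sk k powr (d - l)))"
        unfolding cc_def by (simp add: ennreal_mult')
      also have "cc k * (K * r powr l * sk k powr (d - l)) = K * r powr l * 2 powr q * R powr \<theta> * h ^ k"
      proof -
        have "cc k = sk k powr (-q) * 2 powr q"
          unfolding cc_def using sk_pos[of k] by (simp add: powr_divide powr_minus_divide)
        moreover have "sk k powr (-q) * sk k powr (d - l) = sk k powr \<theta>"
          unfolding \<theta>_def by (simp add: powr_add[symmetric])
        moreover have "sk k powr \<theta> = R powr \<theta> * h ^ k"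
          unfolding sk_def h_def using rR
          by (simp add: powr_mult powr_realpow[symmetric] powr_powr mult.commute)
        ultimately show ?thesis by (simp add: algebra_simps)
      qed
      finally show "ennreal (cc k) * emeasure lborel (T k) \<le> ennreal (K * r powr l * 2 powr q * R powr \<theta> * h ^ k)" .
    qed auto
    also have "\<dots> = ennreal (K * r powr l * 2 powr q * R powr \<theta> / (1 - h))"
    proof -
      have "(\<lambda>k. K * r powr l * 2 powr q * R powr \<theta> * h ^ k) sums (K * r powr l * 2 powr q * R powr \<theta> * (1 / (1 - h)))"
        using h by (intro sums_mult geometric_sums) auto
      then show ?thesis using K h
        by (subst suminf_ennreal_eq[of _ "K * r powr l * 2 powr q * R powr \<theta> * (1 / (1 - h))"]) auto
    qed
    finally have Is: "(\<integral>\<^sup>+y. gs y \<partial>lborel) \<le> ennreal (K * r powr l * 2 powr q * R powr \<theta> / (1 - h))" .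
    have fin: "ennreal (R powr (-q) * (\<omega> * r ^ DIM('a))) + ennreal (K * r powr l * 2 powr q * R powr \<theta> / (1 - h))
        \<le> ennreal (C * r ^ DIM('a) * R powr (-q))"
    proof -
      have "R powr \<theta> = R powr (d - l) * R powr (-q)" unfolding \<theta>_def by (simp add: powr_add[symmetric])
      also have "\<dots> \<le> r powr (d - l) * R powr (-q)"
        using rR q unfolding d_def by (intro mult_right_mono powr_mono2) auto
      finally have "r powr l * R powr \<theta> \<le> r powr l * (r powr (d - l) * R powr (-q))"
        by (intro mult_left_mono) auto
      also have "\<dots> = r ^ DIM('a) * R powr (-q)"
        using rR unfolding d_def by (simp add: powr_add[symmetric] powr_realpow)
      finally have 1: "r powr l * R powr \<theta> \<le> r ^ DIM('a) * R powr (-q)" .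
      have "K * r powr l * 2 powr q * R powr \<theta> / (1 - h) = (K * 2 powr q / (1 - h)) * (r powr l * R powr \<theta>)"
        by (simp add: field_simps)
      also have "\<dots> \<le> (K * 2 powr q / (1 - h)) * (r ^ DIM('a) * R powr (-q))"
        using 1 K h by (intro mult_left_mono) auto
      finally have 2: "K * r powr l * 2 powr q * R powr \<theta> / (1 - h) \<le> (K * 2 powr q / (1 - h)) * (r ^ DIM('a) * R powr (-q))" .
      have "ennreal (R powr (-q) * (\<omega> * r ^ DIM('a))) + ennreal (K * r powr l * 2 powr q * R powr \<theta> / (1 - h))
          = ennreal (R powr (-q) * (\<omega> * r ^ DIM('a)) + K * r powr l * 2 powr q * R powr \<theta> / (1 - h))"
        using K h \<omega> rR by (intro ennreal_plus[symmetric]) auto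
      also have "\<dots> \<le> ennreal (C * r ^ DIM('a) * R powr (-q))"
        using 2 unfolding C_def by (intro ennreal_leI) (simp add: algebra_simps)
      finally show ?thesis .
    qed
    have "(\<integral>\<^sup>+y. ennreal c * (indicator (ball x r) y * ennreal (min (infdist y E) R powr (-q))) \<partial>lborel)
        \<le> (\<integral>\<^sup>+y. ennreal c * (g0 y + gs y) \<partial>lborel)"
      by (intro nn_integral_mono mult_left_mono pw) simp
    also have "\<dots> = ennreal c * (\<integral>\<^sup>+y. g0 y + gs y \<partial>lborel)"
      using bm0 bms by (intro nn_integral_cmult) auto
    also have "(\<integral>\<^sup>+y. g0 y + gs y \<partial>lborel) = (\<integral>\<^sup>+y. g0 y \<partial>lborel) + (\<integral>\<^sup>+y. gs y \<partial>lborel)"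
      using bm0 bms by (rule nn_integral_add)
    also have "\<dots> \<le> ennreal (R powr (-q) * (\<omega> * r ^ DIM('a))) + ennreal (K * r powr l * 2 powr q * R powr \<theta> / (1 - h))"
      unfolding I0 using Is by (rule add_left_mono)
    also note fin
    finally have "(\<integral>\<^sup>+y. ennreal c * (indicator (ball x r) y * ennreal (min (infdist y E) R powr (-q))) \<partial>lborel)
       \<le> ennreal c * ennreal (C * r ^ DIM('a) * R powr (-q))" by (simp add: mult_left_mono)
    then show "(\<integral>\<^sup>+y. ennreal c * (indicator (ball x r) y * ennreal (min (infdist y E) R powr (-q))) \<partial>lborel)
       \<le> ennreal (c * (C * r ^ DIM('a) * R powr (-q)))" using c0 ennreal_mult'[OF c0, of "C * r ^ DIM('a) * R powr (-q)"] by simp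
  qed
qed

lemma trunc_inf [simp]: "trunc t \<infinity> = t" by (simp add: trunc_def)
lemma trunc_ereal [simp]: "trunc t (ereal a) = min t a" by (simp add: trunc_def min_def)

lemma trunc_pos: "0 < A \<Longrightarrow> 0 < t \<Longrightarrow> 0 < trunc t A"
  by (cases A) auto
lemma trunc_le: "0 < A \<Longrightarrow> trunc t A \<le> t"
  by (cases A) auto
lemma trunc_mono: "0 < A \<Longrightarrow> t \<le> u \<Longrightarrow> trunc t A \<le> trunc u A"
  by (cases A) auto
lemma trunc_scale: "0 < A \<Longrightarrow> 0 \<le> t \<Longrightarrow> 0 \<le> c \<Longrightarrow> c \<le> 1 \<Longrightarrow> c * trunc t A \<le> trunc (c * t) A"
proof (cases A)
  case (real a)
  assume "0 < A" "0 \<le> t" "0 \<le> c" "c \<le> 1"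
  then have "c * a \<le> a" using real by (simp add: mult_left_le_one_le)
  moreover have "c * min t a \<le> c * t" "c * min t a \<le> c * a" using \<open>0 \<le> c\<close> by (auto intro: mult_left_mono)
  ultimately show ?thesis using real by simp
qed auto
lemma trunc_min: "0 < A \<Longrightarrow> min t (trunc r A) \<le> trunc t A"
  by (cases A) auto
lemma trunc_double: "0 < A \<Longrightarrow> 0 \<le> r \<Longrightarrow> trunc (2 * r) A \<le> 2 * trunc r A"
  using trunc_scale[of A "2 * r" "1/2"] by simp

lemma bdist_pos: "open D \<Longrightarrow> frontier D \<noteq> {} \<Longrightarrow> y \<in> D \<Longrightarrow> 0 < bdist D y"
  unfolding bdist_def
  by (rule infdist_pos_not_in_closed) (auto simp: frontier_def interior_open)

lemma bdist_half: "2 * r \<le> bdist D x \<Longrightarrow> y \<in> ball x r \<Longrightarrow> bdist D x / 2 \<le> bdist D y"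
  unfolding bdist_def using infdist_triangle[of x "frontier D" y] by simp

lemma exp_below:
  assumes "assouad_dim E < ereal d'" "real_of_ereal (assouad_dim E) < t"
  shows "\<exists>l\<in>assouad_exps E. l < t"
proof -
  let ?S = "assouad_exps E"
  have ge0: "0 \<le> assouad_dim E" unfolding assouad_dim_def
    by (rule Inf_greatest) (auto simp: assouad_exps_def)
  have "assouad_dim E \<noteq> \<infinity>" using assms(1) by auto
  with ge0 have "assouad_dim E = ereal (real_of_ereal (assouad_dim E))"
    by (cases "assouad_dim E") auto
  then have "assouad_dim E < ereal t" using assms(2) by (metis less_ereal.simps(1))
  then have "Inf (ereal ` ?S) < ereal t" unfolding assouad_dim_def .
  then obtain l where "l \<in> ?S" "ereal l < ereal t" by (auto simp: Inf_less_iff)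
  then show ?thesis by auto
qed

lemma key:
  fixes E :: "'a::euclidean_space set"
  assumes "l \<in> assouad_exps E" "closed E" "E \<noteq> {}" "0 \<le> q" "l + q < real DIM('a)"
  shows "\<exists>C>0. \<forall>x r R c. 0 < R \<and> R \<le> r \<and> 0 \<le> c \<longrightarrow>
     (\<integral>\<^sup>+y. ennreal c * (indicator (ball x r) y * ennreal (min (infdist y E) R powr (-q))) \<partial>lborel)
       \<le> ennreal (c * (C * r ^ DIM('a) * R powr (-q)))"
proof -
  obtain M where M: "M > 0" "\<forall>z\<in>E. \<forall>\<rho> s. 0 < s \<and> s \<le> \<rho> \<longrightarrow>
     (\<exists>F. finite F \<and> real (card F) \<le> M * (\<rho> / s) powr l \<and> ball z \<rho> \<inter> E \<subseteq> (\<Union>c\<in>F. ball c s))"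
    using cov[OF assms(1,2)] by blast
  obtain K where K: "K > 0" "\<forall>x \<rho> s. 0 < s \<and> s \<le> \<rho> \<longrightarrow>
     emeasure lborel {y\<in>ball x \<rho>. infdist y E < s} \<le> ennreal (K * \<rho> powr l * s powr (real DIM('a) - l))"
    using tube[OF M assms(3)] by blast
  show ?thesis using intg[OF K assms(4,5)] .
qed

lemma part_i:
  fixes D :: "'a::euclidean_space set"
  assumes D: "open D" "frontier D \<noteq> {}" and q: "0 \<le> q"
    and C': "C' > 0" "\<forall>x r R c. 0 < R \<and> R \<le> r \<and> 0 \<le> c \<longrightarrow>
     (\<integral>\<^sup>+y. ennreal c * (indicator (ball x r) y * ennreal (min (infdist y (frontier D)) R powr (-q))) \<partial>lborel)
       \<le> ennreal (c * (C' * r ^ DIM('a) * R powr (-q)))"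
  shows "\<exists>C>0. \<forall>A x r. A > 0 \<and> x \<in> closure D \<and> r > 0 \<longrightarrow>
              (\<integral>\<^sup>+ y. indicator (ball x r \<inter> D) y
                   * ennreal (1 / (trunc (bdist D y) A) powr q) \<partial>lborel)
              \<le> ennreal (C * r ^ DIM('a) / (trunc (max (bdist D x) r) A) powr q)"
proof -
  define \<omega> where "\<omega> = unit_ball_vol (real DIM('a))"
  have \<omega>: "\<omega> > 0" unfolding \<omega>_def by simp
  define C where "C = 2 powr q * (\<omega> + C')"
  have Cpos: "C > 0" unfolding C_def using \<omega> C' by simp
  show ?thesis
  proof (intro exI[of _ C] conjI Cpos allI impI)
    fix A :: ereal and x :: 'a and r :: real
    assume Axr: "A > 0 \<and> x \<in> closure D \<and> r > 0"
    then have A: "A > 0" and r: "r > 0" by auto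
    define t where "t = trunc (max (bdist D x) r) A"
    have t: "t > 0" unfolding t_def using A r by (intro trunc_pos) auto
    show "(\<integral>\<^sup>+ y. indicator (ball x r \<inter> D) y * ennreal (1 / (trunc (bdist D y) A) powr q) \<partial>lborel)
              \<le> ennreal (C * r ^ DIM('a) / t powr q)"
    proof (cases "2 * r \<le> bdist D x")
      case True
      have pw: "indicator (ball x r \<inter> D) y * ennreal (1 / (trunc (bdist D y) A) powr q)
          \<le> ennreal (2 powr q / t powr q) * indicator (ball x r) y" for y
      proof (cases "y \<in> ball x r \<inter> D")
        case False
        then show ?thesis by (simp add: indicator_def)
      next
        case yin: True
        have "t / 2 = (1/2) * trunc (bdist D x) A" unfolding t_def using True r by simp
        also have "\<dots> \<le> trunc ((1/2) * bdist D x) A"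
          using A True r by (intro trunc_scale) auto
        also have "\<dots> \<le> trunc (bdist D y) A"
          using bdist_half[OF True, of y] yin A by (intro trunc_mono) auto
        finally have le: "t / 2 \<le> trunc (bdist D y) A" .
        have "(t / 2) powr q \<le> trunc (bdist D y) A powr q"
          using le t q by (intro powr_mono2) auto
        moreover have "0 < (t / 2) powr q" "0 < trunc (bdist D y) A powr q" using t le by auto
        ultimately have "1 / trunc (bdist D y) A powr q \<le> 1 / (t / 2) powr q"
          by (intro divide_left_mono) auto
        also have "\<dots> = 2 powr q / t powr q" using t by (simp add: powr_divide)
        finally show ?thesis using yin by (simp add: ennreal_leI)
      qed
      have "(\<integral>\<^sup>+ y. indicator (ball x r \<inter> D) y * ennreal (1 / (trunc (bdist D y) A) powr q) \<partial>lborel)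
          \<le> (\<integral>\<^sup>+ y. ennreal (2 powr q / t powr q) * indicator (ball x r) y \<partial>lborel)"
        by (intro nn_integral_mono pw)
      also have "\<dots> = ennreal (2 powr q / t powr q) * ennreal (\<omega> * r ^ DIM('a))"
        unfolding \<omega>_def using r by (simp add: nn_integral_cmult_indicator emeasure_ball)
      also have "\<dots> = ennreal (2 powr q / t powr q * (\<omega> * r ^ DIM('a)))"
        using ennreal_mult'[of "2 powr q / t powr q" "\<omega> * r ^ DIM('a)"] by simp
      also have "\<dots> \<le> ennreal (C * r ^ DIM('a) / t powr q)"
      proof (intro ennreal_leI)
        have "2 powr q / t powr q * (\<omega> * r ^ DIM('a)) = (2 powr q * \<omega>) * r ^ DIM('a) / t powr q" by simp
        also have "\<dots> \<le> C * r ^ DIM('a) / t powr q"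
          unfolding C_def using C' r t by (intro divide_right_mono mult_right_mono) (auto simp: algebra_simps)
        finally show "2 powr q / t powr q * (\<omega> * r ^ DIM('a)) \<le> C * r ^ DIM('a) / t powr q" .
      qed
      finally show ?thesis .
    next
      case False
      define R where "R = trunc r A"
      have R: "0 < R" "R \<le> r" unfolding R_def using A r by (auto intro: trunc_pos trunc_le)
      have tR: "t \<le> 2 * R"
      proof -
        have "t \<le> trunc (2 * r) A" unfolding t_def using False A r by (intro trunc_mono) auto
        also have "\<dots> \<le> 2 * R" unfolding R_def using A r by (intro trunc_double) auto
        finally show ?thesis .
      qed
      have pw: "indicator (ball x r \<inter> D) y * ennreal (1 / (trunc (bdist D y) A) powr q)
          \<le> ennreal 1 * (indicator (ball x r) y * ennreal (min (infdist y (frontier D)) R powr (-q)))" for y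
      proof (cases "y \<in> ball x r \<inter> D")
        case False
        then show ?thesis by (simp add: indicator_def)
      next
        case yin: True
        have dpos: "0 < bdist D y" using bdist_pos[OF D] yin by auto
        define u where "u = min (bdist D y) R"
        have u: "0 < u" "u \<le> trunc (bdist D y) A"
          unfolding u_def R_def using dpos R A trunc_min[OF A, of "bdist D y" r] by (auto simp: R_def)
        have "u powr q \<le> trunc (bdist D y) A powr q" using u q by (intro powr_mono2) auto
        moreover have "0 < u powr q" "0 < trunc (bdist D y) A powr q" using u by auto
        ultimately have "1 / trunc (bdist D y) A powr q \<le> 1 / u powr q"
          by (intro divide_left_mono) auto
        also have "\<dots> = u powr (-q)" by (simp add: powr_minus_divide)
        finally show ?thesis using yin unfolding u_def bdist_def by (simp add: ennreal_leI)
      qed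
      have "(\<integral>\<^sup>+ y. indicator (ball x r \<inter> D) y * ennreal (1 / (trunc (bdist D y) A) powr q) \<partial>lborel)
          \<le> (\<integral>\<^sup>+ y. ennreal 1 * (indicator (ball x r) y * ennreal (min (infdist y (frontier D)) R powr (-q))) \<partial>lborel)"
        by (intro nn_integral_mono pw)
      also have "\<dots> \<le> ennreal (1 * (C' * r ^ DIM('a) * R powr (-q)))"
        using C'(2)[rule_format, of R r 1 x] R by (simp only: order_refl zero_le_one simp_thms)
      also have "\<dots> \<le> ennreal (C * r ^ DIM('a) / t powr q)"
      proof (intro ennreal_leI)
        have "R powr (-q) = 2 powr q * (2 * R) powr (-q)"
          using R by (simp add: powr_mult powr_minus_divide)
        also have "\<dots> \<le> 2 powr q * t powr (-q)"
          using tR t q by (intro mult_left_mono powr_mono2') auto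
        finally have "R powr (-q) \<le> 2 powr q / t powr q" by (simp add: powr_minus_divide)
        then have "C' * r ^ DIM('a) * R powr (-q) \<le> C' * r ^ DIM('a) * (2 powr q / t powr q)"
          using C' r by (intro mult_left_mono) auto
        also have "\<dots> \<le> C * r ^ DIM('a) / t powr q"
          unfolding C_def using \<omega> r t by (simp add: field_simps)
        finally show "1 * (C' * r ^ DIM('a) * R powr (-q)) \<le> C * r ^ DIM('a) / t powr q" by simp
      qed
      finally show ?thesis .
    qed
  qed
qed

lemma part_ii:
  fixes D :: "'a::euclidean_space set" and \<Phi> :: "real \<Rightarrow> real"
  assumes D: "open D" "frontier D \<noteq> {}" and q: "0 \<le> q"
    and Phi_mono: "mono_on {0..} \<Phi>"
    and Phi_ge1: "\<And>t. t \<ge> 0 \<Longrightarrow> \<Phi> t \<ge> 1"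
    and C1: "C1 > 1" "\<forall>s r. 0 < s \<and> s \<le> r \<longrightarrow> \<Phi> r / \<Phi> s \<le> C1 * (r / s) powr q"
    and C': "C' > 0" "\<forall>x r R c. 0 < R \<and> R \<le> r \<and> 0 \<le> c \<longrightarrow>
     (\<integral>\<^sup>+y. ennreal c * (indicator (ball x r) y * ennreal (min (infdist y (frontier D)) R powr (-q))) \<partial>lborel)
       \<le> ennreal (c * (C' * r ^ DIM('a) * R powr (-q)))"
  shows "\<exists>C>0. \<forall>A x a r. A > 0 \<and> x \<in> closure D \<and> a > 0 \<and> r > 0 \<longrightarrow>
              (\<integral>\<^sup>+ y. indicator (ball x r \<inter> D) y
                   * ennreal (\<Phi> (a / trunc (bdist D y) A)) \<partial>lborel)
              \<le> ennreal (C * r ^ DIM('a) * \<Phi> (a / trunc (max (bdist D x) r) A))"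
proof -
  have scal: "\<Phi> r \<le> C1 * (r / s) powr q * \<Phi> s" if "0 < s" "s \<le> r" for s r
  proof -
    have "\<Phi> s \<ge> 1" using Phi_ge1 that by simp
    then show ?thesis using C1(2)[rule_format, of s r] that by (simp add: divide_le_eq)
  qed
  have mono: "\<Phi> u \<le> \<Phi> v" if "0 \<le> u" "u \<le> v" for u v
    using Phi_mono that by (auto intro: mono_onD)
  define \<omega> where "\<omega> = unit_ball_vol (real DIM('a))"
  have \<omega>: "\<omega> > 0" unfolding \<omega>_def by simp
  define C where "C = C1 * 2 powr q * (\<omega> + C')"
  have Cpos: "C > 0" unfolding C_def using \<omega> C' C1 by simp
  show ?thesis
  proof (intro exI[of _ C] conjI Cpos allI impI)
    fix A :: ereal and x :: 'a and a r :: real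
    assume Axr: "A > 0 \<and> x \<in> closure D \<and> a > 0 \<and> r > 0"
    then have A: "A > 0" and r: "r > 0" and a: "a > 0" by auto
    define t where "t = trunc (max (bdist D x) r) A"
    have t: "t > 0" unfolding t_def using A r by (intro trunc_pos) auto
    have Pt: "\<Phi> (a / t) \<ge> 1" using Phi_ge1 a t by simp
    show "(\<integral>\<^sup>+ y. indicator (ball x r \<inter> D) y * ennreal (\<Phi> (a / trunc (bdist D y) A)) \<partial>lborel)
              \<le> ennreal (C * r ^ DIM('a) * \<Phi> (a / t))"
    proof (cases "2 * r \<le> bdist D x")
      case True
      define B where "B = C1 * 2 powr q * \<Phi> (a / t)"
      have B: "B > 0" unfolding B_def using C1 Pt by simp
      have pw: "indicator (ball x r \<inter> D) y * ennreal (\<Phi> (a / trunc (bdist D y) A))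
          \<le> ennreal B * indicator (ball x r) y" for y
      proof (cases "y \<in> ball x r \<inter> D")
        case False
        then have "indicator (ball x r \<inter> D) y = (0::ennreal)" by (rule indicator_simps(2))
        then show ?thesis by simp
      next
        case yin: True
        have "t / 2 = (1/2) * trunc (bdist D x) A" unfolding t_def using True r by simp
        also have "\<dots> \<le> trunc ((1/2) * bdist D x) A"
          using A True r by (intro trunc_scale) auto
        also have "\<dots> \<le> trunc (bdist D y) A"
          using bdist_half[OF True, of y] yin A by (intro trunc_mono) auto
        finally have le: "t / 2 \<le> trunc (bdist D y) A" .
        have "a / trunc (bdist D y) A \<le> a / (t / 2)"
          using le t a by (intro divide_left_mono) auto
        then have "\<Phi> (a / trunc (bdist D y) A) \<le> \<Phi> (a / (t / 2))"
          using le t a by (intro mono) auto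
        also have "\<dots> \<le> C1 * ((a / (t / 2)) / (a / t)) powr q * \<Phi> (a / t)"
          using a t by (intro scal) (auto simp: field_simps)
        also have "(a / (t / 2)) / (a / t) = 2" using a t by (simp add: field_simps)
        finally have "\<Phi> (a / trunc (bdist D y) A) \<le> B" unfolding B_def by simp
        then show ?thesis using yin by (simp add: ennreal_leI)
      qed
      have "(\<integral>\<^sup>+ y. indicator (ball x r \<inter> D) y * ennreal (\<Phi> (a / trunc (bdist D y) A)) \<partial>lborel)
          \<le> (\<integral>\<^sup>+ y. ennreal B * indicator (ball x r) y \<partial>lborel)"
        by (intro nn_integral_mono pw)
      also have "\<dots> = ennreal B * ennreal (\<omega> * r ^ DIM('a))"
        unfolding \<omega>_def using r by (simp add: nn_integral_cmult_indicator emeasure_ball)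
      also have "\<dots> = ennreal (B * (\<omega> * r ^ DIM('a)))"
        using ennreal_mult'[of B "\<omega> * r ^ DIM('a)"] B by simp
      also have "\<dots> \<le> ennreal (C * r ^ DIM('a) * \<Phi> (a / t))"
      proof (intro ennreal_leI)
        have "B * (\<omega> * r ^ DIM('a)) = (C1 * 2 powr q * \<omega>) * r ^ DIM('a) * \<Phi> (a / t)"
          unfolding B_def by simp
        also have "\<dots> \<le> C * r ^ DIM('a) * \<Phi> (a / t)"
          unfolding C_def using C' C1 r Pt by (intro mult_right_mono) (auto simp: algebra_simps)
        finally show "B * (\<omega> * r ^ DIM('a)) \<le> C * r ^ DIM('a) * \<Phi> (a / t)" .
      qed
      finally show ?thesis .
    next
      case False
      define R where "R = trunc r A"
      have R: "0 < R" "R \<le> r" unfolding R_def using A r by (auto intro: trunc_pos trunc_le)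
      have tR: "t \<le> 2 * R"
      proof -
        have "t \<le> trunc (2 * r) A" unfolding t_def using False A r by (intro trunc_mono) auto
        also have "\<dots> \<le> 2 * R" unfolding R_def using A r by (intro trunc_double) auto
        finally show ?thesis .
      qed
      define c where "c = C1 * (2 * R) powr q * \<Phi> (a / t)"
      have c: "c > 0" unfolding c_def using C1 R Pt by simp
      have pw: "indicator (ball x r \<inter> D) y * ennreal (\<Phi> (a / trunc (bdist D y) A))
          \<le> ennreal c * (indicator (ball x r) y * ennreal (min (infdist y (frontier D)) R powr (-q)))" for y
      proof (cases "y \<in> ball x r \<inter> D")
        case False
        then have "indicator (ball x r \<inter> D) y = (0::ennreal)" by (rule indicator_simps(2))
        then show ?thesis by simp
      next
        case yin: True
        have dpos: "0 < bdist D y" using bdist_pos[OF D] yin by auto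
        define u where "u = min (bdist D y) R"
        have u: "0 < u" "u \<le> trunc (bdist D y) A" "u \<le> R"
          unfolding u_def R_def using dpos R A trunc_min[OF A, of "bdist D y" r] by (auto simp: R_def)
        have "a / trunc (bdist D y) A \<le> a / u"
          using u a by (intro divide_left_mono) auto
        then have "\<Phi> (a / trunc (bdist D y) A) \<le> \<Phi> (a / u)"
          using u a by (intro mono) auto
        also have "\<dots> \<le> C1 * ((a / u) / (a / (2 * R))) powr q * \<Phi> (a / (2 * R))"
          using a u R by (intro scal) (auto simp: field_simps)
        also have "(a / u) / (a / (2 * R)) = 2 * R / u" using a u R by (simp add: field_simps)
        also have "\<Phi> (a / (2 * R)) \<le> \<Phi> (a / t)"
          using a t R tR by (intro mono) (auto intro: divide_left_mono)
        then have "C1 * (2 * R / u) powr q * \<Phi> (a / (2 * R)) \<le> C1 * (2 * R / u) powr q * \<Phi> (a / t)"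
          using C1 by (intro mult_left_mono) auto
        also have "C1 * (2 * R / u) powr q * \<Phi> (a / t) = c * u powr (-q)"
          unfolding c_def using u R by (simp add: powr_divide powr_minus_divide)
        finally have "\<Phi> (a / trunc (bdist D y) A) \<le> c * u powr (-q)" .
        then show ?thesis using yin c unfolding u_def bdist_def by (simp add: ennreal_leI ennreal_mult'[symmetric])
      qed
      have "(\<integral>\<^sup>+ y. indicator (ball x r \<inter> D) y * ennreal (\<Phi> (a / trunc (bdist D y) A)) \<partial>lborel)
          \<le> (\<integral>\<^sup>+ y. ennreal c * (indicator (ball x r) y * ennreal (min (infdist y (frontier D)) R powr (-q))) \<partial>lborel)"
        by (intro nn_integral_mono pw)
      also have "\<dots> \<le> ennreal (c * (C' * r ^ DIM('a) * R powr (-q)))"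
        using C'(2)[rule_format, of R r c x] R c by simp
      also have "\<dots> \<le> ennreal (C * r ^ DIM('a) * \<Phi> (a / t))"
      proof (intro ennreal_leI)
        have "(2 * R) powr q * R powr (-q) = 2 powr q"
          using R by (simp add: powr_mult powr_minus_divide)
        then have "c * (C' * r ^ DIM('a) * R powr (-q)) = C1 * 2 powr q * C' * r ^ DIM('a) * \<Phi> (a / t)"
          unfolding c_def by (simp add: algebra_simps)
        also have "\<dots> \<le> C * r ^ DIM('a) * \<Phi> (a / t)"
          unfolding C_def using \<omega> C1 r Pt
          by (intro mult_right_mono) (auto simp: algebra_simps)
        finally show "c * (C' * r ^ DIM('a) * R powr (-q)) \<le> C * r ^ DIM('a) * \<Phi> (a / t)" .
      qed
      finally show ?thesis .
    qed
  qed
qed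

theorem lemma2p7:
  fixes D :: "'a::euclidean_space set" and \<kappa> R0 \<alpha> :: real and \<Phi> :: "real \<Rightarrow> real"
  assumes alpha: "0 < \<alpha>" "\<alpha> < 2"
    and fat: "kappa_fat \<kappa> R0 D"
    and bdry: "frontier D \<noteq> {}"
    and assouad: "assouad_dim (frontier D) < ereal (real DIM('a))"
    and Phi_cont: "continuous_on {0..} \<Phi>"
    and Phi_mono: "mono_on {0..} \<Phi>"
    and Phi_ge1: "\<And>t. t \<ge> 0 \<Longrightarrow> \<Phi> t \<ge> 1"
    and Phi0: "\<Phi> 0 = 1"
    and Phi_scal: "scaling_exps \<Phi> \<noteq> {}"
    and beta_bar: "Inf (scaling_exps \<Phi>)
                     < min (real DIM('a) - real_of_ereal (assouad_dim (frontier D))) \<alpha>"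
  shows "(\<forall>q. 0 \<le> q \<and> q < real DIM('a) - real_of_ereal (assouad_dim (frontier D)) \<longrightarrow>
           (\<exists>C>0. \<forall>A x r. A > 0 \<and> x \<in> closure D \<and> r > 0 \<longrightarrow>
              (\<integral>\<^sup>+ y. indicator (ball x r \<inter> D) y
                   * ennreal (1 / (trunc (bdist D y) A) powr q) \<partial>lborel)
              \<le> ennreal (C * r ^ DIM('a) / (trunc (max (bdist D x) r) A) powr q)))
       \<and> (\<exists>C>0. \<forall>A x a r. A > 0 \<and> x \<in> closure D \<and> a > 0 \<and> r > 0 \<longrightarrow>
              (\<integral>\<^sup>+ y. indicator (ball x r \<inter> D) y
                   * ennreal (\<Phi> (a / trunc (bdist D y) A)) \<partial>lborel)
              \<le> ennreal (C * r ^ DIM('a) * \<Phi> (a / trunc (max (bdist D x) r) A)))"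
proof -
  let ?E = "frontier D"
  let ?d = "real DIM('a)"
  have oD: "open D" using fat unfolding kappa_fat_def by blast
  have cE: "closed ?E" by simp
  have P1: "\<forall>q. 0 \<le> q \<and> q < ?d - real_of_ereal (assouad_dim ?E) \<longrightarrow>
           (\<exists>C>0. \<forall>A x r. A > 0 \<and> x \<in> closure D \<and> r > 0 \<longrightarrow>
              (\<integral>\<^sup>+ y. indicator (ball x r \<inter> D) y
                   * ennreal (1 / (trunc (bdist D y) A) powr q) \<partial>lborel)
              \<le> ennreal (C * r ^ DIM('a) / (trunc (max (bdist D x) r) A) powr q))"
  proof (intro allI impI)
    fix q :: real assume q: "0 \<le> q \<and> q < ?d - real_of_ereal (assouad_dim ?E)"
    then obtain l where l: "l \<in> assouad_exps ?E" "l < ?d - q"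
      using exp_below[OF assouad, of "?d - q"] by auto
    obtain C' where "C' > 0" "\<forall>x r R c. 0 < R \<and> R \<le> r \<and> 0 \<le> c \<longrightarrow>
     (\<integral>\<^sup>+y. ennreal c * (indicator (ball x r) y * ennreal (min (infdist y ?E) R powr (-q))) \<partial>lborel)
       \<le> ennreal (c * (C' * r ^ DIM('a) * R powr (-q)))"
      using key[OF l(1) cE bdry, of q] q l(2) by auto
    from part_i[OF oD bdry _ this] q
    show "\<exists>C>0. \<forall>A x r. A > 0 \<and> x \<in> closure D \<and> r > 0 \<longrightarrow>
              (\<integral>\<^sup>+ y. indicator (ball x r \<inter> D) y
                   * ennreal (1 / (trunc (bdist D y) A) powr q) \<partial>lborel)
              \<le> ennreal (C * r ^ DIM('a) / (trunc (max (bdist D x) r) A) powr q)" by blast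
  qed
  have "Inf (scaling_exps \<Phi>) < ?d - real_of_ereal (assouad_dim ?E)" using beta_bar by simp
  then obtain \<beta> where b: "\<beta> \<in> scaling_exps \<Phi>" "\<beta> < ?d - real_of_ereal (assouad_dim ?E)"
    using cInf_lessD[OF Phi_scal] by blast
  then obtain C1 where b0: "\<beta> \<ge> 0" and C1: "C1 > 1" "\<forall>s r. 0 < s \<and> s \<le> r \<longrightarrow> \<Phi> r / \<Phi> s \<le> C1 * (r / s) powr \<beta>"
    unfolding scaling_exps_def by blast
  obtain l where l: "l \<in> assouad_exps ?E" "l < ?d - \<beta>"
    using exp_below[OF assouad, of "?d - \<beta>"] b(2) by auto
  obtain C' where "C' > 0" "\<forall>x r R c. 0 < R \<and> R \<le> r \<and> 0 \<le> c \<longrightarrow>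
     (\<integral>\<^sup>+y. ennreal c * (indicator (ball x r) y * ennreal (min (infdist y ?E) R powr (-\<beta>))) \<partial>lborel)
       \<le> ennreal (c * (C' * r ^ DIM('a) * R powr (-\<beta>)))"
    using key[OF l(1) cE bdry, of \<beta>] b0 l(2) by auto
  from part_ii[OF oD bdry b0 Phi_mono Phi_ge1 C1 this] P1 show ?thesis by blast
qed

end
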